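(* Let $S\ni h$ be a $2$-admissible polarized lattice with $h^2=8$, $\Delta$ a Weyl chamber for $\operatorname{rt}(S,h)$, $\Gamma=\operatorname{Fn}_\Delta(S,h)$, and $v_1,v_2\in\Gamma$ two distinct vertices. Then the induced subgraph $\operatorname{Star}(v_1)\cap\operatorname{Star}(v_2)$ has no edges, and: (1) if $v_1\cdot v_2=1$, then $|\operatorname{Star}(v_1)\cap\operatorname{Star}(v_2)|\le1$; (2) if $v_1\cdot v_2=0$, then $|\operatorname{Star}(v_1)\cap\operatorname{Star}(v_2)|\le3$. If, in addition, $S\ni h$ is $3$-admissible, then both inequalities are strict.
   Context: All lattices even; $(S,h)$ polarized: $S$ hyperbolic, $h^2>0$. $\operatorname{root}_n(S,h)=\{r: r^2=-2,\ r\cdot h=n\}$, $\operatorname{rt}(S,h)$ spanned by $\operatorname{root}_0(S,h)$; a Weyl chamber $\Delta$ has simple roots $\mathfrak{b}(\Delta)$. $\Gamma=\operatorname{Fn}_\Delta(S,h)=\{l\in\operatorname{root}_1(S,h): l\cdot e\ge0\ \forall e\in\mathfrak{b}(\Delta)\}$, with edges of multiplicity $l_1\cdot l_2$. $\operatorname{Star}(v)=\{l\in\Gamma: l\cdot v=1\}$. $w$ is $m$-isotropic if $w^2=0$, $w\cdot h=m$; $2$-admissible: no $1$- or $2$-isotropic vector; $3$-admissible: in addition no $3$-isotropic vector. *)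

theory Defs
  imports "HOL-Analysis.Analysis"
begin

text \<open>A lattice of rank CARD('n) is modelled as int^'n with an integer Gram matrix G.\<close>

definition bil :: "int^'n^'n \<Rightarrow> int^'n \<Rightarrow> int^'n \<Rightarrow> int" where
  "bil G x y = (\<Sum>i\<in>UNIV. \<Sum>j\<in>UNIV. x$i * G$i$j * y$j)"

definition bilR :: "int^'n^'n \<Rightarrow> real^'n \<Rightarrow> real^'n \<Rightarrow> real" where
  "bilR G x y = (\<Sum>i\<in>UNIV. \<Sum>j\<in>UNIV. x$i * of_int (G$i$j) * y$j)"

definition ivec :: "int^'n \<Rightarrow> real^'n" where
  "ivec x = (\<chi> i. of_int (x$i))"

definition even_lattice :: "int^'n^'n \<Rightarrow> bool" where
  "even_lattice G \<longleftrightarrow> (\<forall>i j. G$i$j = G$j$i) \<and> (\<forall>i. even (G$i$i)) \<and> det G \<noteq> 0"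

text \<open>Hyperbolic: signature (1, rank-1), i.e. nondegenerate with positive inertia index 1:
  there is a positive vector, and there is no 2-dimensional real subspace on which the
  form is positive definite.\<close>
definition hyperbolic :: "int^'n^'n \<Rightarrow> bool" where
  "hyperbolic G \<longleftrightarrow> even_lattice G \<and> (\<exists>v. bilR G v v > 0) \<and>
     \<not> (\<exists>u w. \<not> dependent {u, w} \<and> u \<noteq> w \<and>
            (\<forall>a b. (a, b) \<noteq> (0::real, 0::real) \<longrightarrow>
               bilR G (a *\<^sub>R u + b *\<^sub>R w) (a *\<^sub>R u + b *\<^sub>R w) > 0))"

definition polarized :: "int^'n^'n \<Rightarrow> int^'n \<Rightarrow> bool" where
  "polarized G h \<longleftrightarrow> hyperbolic G \<and> bil G h h > 0"

definition root :: "int^'n^'n \<Rightarrow> int^'n \<Rightarrow> int \<Rightarrow> (int^'n) set" where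
  "root G h n = {r. bil G r r = -2 \<and> bil G r h = n}"

definition isotropic :: "int^'n^'n \<Rightarrow> int^'n \<Rightarrow> int \<Rightarrow> int^'n \<Rightarrow> bool" where
  "isotropic G h m w \<longleftrightarrow> bil G w w = 0 \<and> bil G w h = m"

definition admissible2 :: "int^'n^'n \<Rightarrow> int^'n \<Rightarrow> bool" where
  "admissible2 G h \<longleftrightarrow> (\<nexists>w. isotropic G h 1 w) \<and> (\<nexists>w. isotropic G h 2 w)"

definition admissible3 :: "int^'n^'n \<Rightarrow> int^'n \<Rightarrow> bool" where
  "admissible3 G h \<longleftrightarrow> admissible2 G h \<and> (\<nexists>w. isotropic G h 3 w)"

text \<open>Weyl chambers of rt(S,h) (a root system in h-perp tensor R) are parametrized by
  generic vectors c in h-perp tensor R, i.e. c orthogonal to no root in root_0; the chamber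
  is the one containing c.\<close>
definition weyl_generic :: "int^'n^'n \<Rightarrow> int^'n \<Rightarrow> real^'n \<Rightarrow> bool" where
  "weyl_generic G h c \<longleftrightarrow> bilR G c (ivec h) = 0 \<and> (\<forall>r\<in>root G h 0. bilR G c (ivec r) \<noteq> 0)"

definition pos_roots :: "int^'n^'n \<Rightarrow> int^'n \<Rightarrow> real^'n \<Rightarrow> (int^'n) set" where
  "pos_roots G h c = {r \<in> root G h 0. bilR G c (ivec r) > 0}"

definition simple_roots :: "int^'n^'n \<Rightarrow> int^'n \<Rightarrow> real^'n \<Rightarrow> (int^'n) set" where
  "simple_roots G h c = {e \<in> pos_roots G h c.
      \<not> (\<exists>a\<in>pos_roots G h c. \<exists>b\<in>pos_roots G h c. e = a + b)}"

definition Fn :: "int^'n^'n \<Rightarrow> int^'n \<Rightarrow> real^'n \<Rightarrow> (int^'n) set" where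
  "Fn G h c = {l \<in> root G h 1. \<forall>e\<in>simple_roots G h c. bil G l e \<ge> 0}"

definition Star :: "int^'n^'n \<Rightarrow> int^'n \<Rightarrow> real^'n \<Rightarrow> int^'n \<Rightarrow> (int^'n) set" where
  "Star G h c v = {l \<in> Fn G h c. bil G l v = 1}"

end

theory Submission
  imports Defs
begin


lemma bil_add1: "bil G (x+y) z = bil G x z + bil G y z"
  unfolding bil_def by (simp add: distrib_left distrib_right sum.distrib)
lemma bil_add2: "bil G z (x+y) = bil G z x + bil G z y"
  unfolding bil_def by (simp add: distrib_left distrib_right sum.distrib)
lemma bil_diff1: "bil G (x-y) z = bil G x z - bil G y z"
  unfolding bil_def by (simp add: left_diff_distrib right_diff_distrib sum_subtractf)
lemma bil_diff2: "bil G z (x-y) = bil G z x - bil G z y"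
  unfolding bil_def by (simp add: left_diff_distrib right_diff_distrib sum_subtractf)
lemma bil_smult1: "bil G (k *s x) y = k * bil G x y"
  unfolding bil_def by (simp add: sum_distrib_left mult.assoc)
lemma bil_smult2: "bil G y (k *s x) = k * bil G y x"
  unfolding bil_def by (simp add: sum_distrib_left algebra_simps)
lemma bil_sym: "even_lattice G \<Longrightarrow> bil G x y = bil G y x"
  unfolding bil_def even_lattice_def
  apply (subst sum.swap) by (simp add: algebra_simps)

lemma bilR_add1: "bilR G (x+y) z = bilR G x z + bilR G y z"
  unfolding bilR_def by (simp add: distrib_left distrib_right sum.distrib)
lemma bilR_add2: "bilR G z (x+y) = bilR G z x + bilR G z y"
  unfolding bilR_def by (simp add: distrib_left distrib_right sum.distrib)
lemma bilR_diff1: "bilR G (x-y) z = bilR G x z - bilR G y z"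
  unfolding bilR_def by (simp add: left_diff_distrib right_diff_distrib sum_subtractf)
lemma bilR_diff2: "bilR G z (x-y) = bilR G z x - bilR G z y"
  unfolding bilR_def by (simp add: left_diff_distrib right_diff_distrib sum_subtractf)
lemma bilR_smult1: "bilR G (k *\<^sub>R x) y = k * bilR G x y"
  unfolding bilR_def by (simp add: sum_distrib_left mult.assoc)
lemma bilR_smult2: "bilR G y (k *\<^sub>R x) = k * bilR G y x"
  unfolding bilR_def by (simp add: sum_distrib_left algebra_simps)
lemma bilR_sym: "even_lattice G \<Longrightarrow> bilR G x y = bilR G y x"
  unfolding bilR_def even_lattice_def
  apply (subst sum.swap) by (simp add: algebra_simps)
lemma bilR_ivec: "bilR G (ivec x) (ivec y) = of_int (bil G x y)"
  unfolding bilR_def bil_def ivec_def by simp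
lemma bilR_zero1[simp]: "bilR G 0 y = 0" unfolding bilR_def by simp
lemma bilR_zero2[simp]: "bilR G y 0 = 0" unfolding bilR_def by simp
lemma ivec_inj: "ivec x = ivec y \<Longrightarrow> x = y"
  unfolding ivec_def by (simp add: vec_eq_iff)
lemma ivec_diff: "ivec (x - y) = ivec x - ivec y"
  unfolding ivec_def by (simp add: vec_eq_iff)

definition rmat :: "int^'n^'n \<Rightarrow> real^'n^'n" where
  "rmat G = (\<chi> i j. of_int (G$i$j))"

lemma det_rmat: "det (rmat G) = of_int (det G)"
  unfolding det_def rmat_def by (simp add: of_int_sum of_int_prod)

lemma bilR_axis: "bilR G (axis i 1) y = (rmat G *v y) $ i"
proof -
  have "bilR G (axis i 1) y = (\<Sum>ia\<in>UNIV. (if ia = i then (\<Sum>j\<in>UNIV. of_int (G $ ia $ j) * y $ j) else 0))"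
    unfolding bilR_def axis_def by (rule sum.cong) (auto simp: sum_distrib_left)
  then show ?thesis unfolding rmat_def matrix_vector_mult_def by simp
qed

lemma nondeg:
  assumes "even_lattice G" "y \<noteq> 0"
  shows "\<exists>z. bilR G y z \<noteq> 0"
proof -
  have "det (rmat G) \<noteq> 0" using assms(1) by (simp add: det_rmat even_lattice_def)
  then have "invertible (rmat G)" using invertible_det_nz by blast
  then obtain B where "B ** rmat G = mat 1" unfolding invertible_def by blast
  then have "rmat G *v y \<noteq> 0" using matrix_left_invertible_ker assms(2) by blast
  then obtain i where "(rmat G *v y) $ i \<noteq> 0" by (metis vec_eq_iff zero_index)
  then show ?thesis using bilR_axis[of G i y] bilR_sym[OF assms(1)] by metis
qed

lemmas bilR_simps = bilR_add1 bilR_add2 bilR_diff1 bilR_diff2 bilR_smult1 bilR_smult2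

lemma no_pos_perp:
  assumes pol: "polarized G h" and yh: "bilR G y (ivec h) = 0" and yy: "bilR G y y > 0"
  shows False
proof -
  let ?H = "ivec h"
  have ev: "even_lattice G" and hyp: "hyperbolic G" and hh0: "bil G h h > 0"
    using pol unfolding polarized_def hyperbolic_def by auto
  have hh: "bilR G ?H ?H > 0" using hh0 by (simp add: bilR_ivec)
  have hy: "bilR G ?H y = 0" using yh bilR_sym[OF ev] by metis
  have ne: "?H \<noteq> y" using hh yh by auto
  have indep: "\<not> dependent {?H, y}"
  proof
    assume "dependent {?H, y}"
    then obtain a where a: "a \<in> {?H, y}" "a \<in> span ({?H, y} - {a})" unfolding dependent_def by blast
    show False
    proof (cases "a = ?H")
      case True
      then have "?H \<in> span {y}" proof -
        have "{?H, y} - {?H} = {y}" using ne by auto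
        then show ?thesis using a True by simp
      qed
      then obtain k where "?H = k *\<^sub>R y" by (auto simp: span_singleton)
      then have "bilR G ?H ?H = k * bilR G y ?H" by (simp add: bilR_smult1)
      then show False using hh yh by simp
    next
      case False
      then have "a = y" using a by auto
      then have "y \<in> span {?H}" proof -
        have "{?H, y} - {y} = {?H}" using ne by auto
        then show ?thesis using a \<open>a = y\<close> by simp
      qed
      then obtain k where k: "y = k *\<^sub>R ?H" by (auto simp: span_singleton)
      then have "bilR G y ?H = k * bilR G ?H ?H" by (simp add: bilR_smult1)
      then have "k = 0" using hh yh by simp
      then show False using k yy by simp
    qed
  qed
  have "\<forall>a b. (a, b) \<noteq> (0::real, 0::real) \<longrightarrow>
               bilR G (a *\<^sub>R ?H + b *\<^sub>R y) (a *\<^sub>R ?H + b *\<^sub>R y) > 0"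
  proof (intro allI impI)
    fix a b :: real assume ab: "(a, b) \<noteq> (0, 0)"
    have e: "bilR G (a *\<^sub>R ?H + b *\<^sub>R y) (a *\<^sub>R ?H + b *\<^sub>R y)
       = a*a * bilR G ?H ?H + b * b * bilR G y y"
      by (simp add: bilR_simps yh hy algebra_simps)
    have "a \<noteq> 0 \<or> b \<noteq> 0" using ab by auto
    then have "a*a * bilR G ?H ?H + b * b * bilR G y y > 0"
    proof
      assume "a \<noteq> 0"
      then have "a*a > 0" using not_real_square_gt_zero by blast
      moreover have "b*b*bilR G y y \<ge> 0" using yy by simp
      ultimately show ?thesis using hh by (simp add: add_pos_nonneg)
    next
      assume "b \<noteq> 0"
      then have "b*b > 0" using not_real_square_gt_zero by blast
      moreover have "a*a*bilR G ?H ?H \<ge> 0" using hh by simp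
      ultimately show ?thesis using yy by (simp add: add_nonneg_pos)
    qed
    then show "bilR G (a *\<^sub>R ?H + b *\<^sub>R y) (a *\<^sub>R ?H + b *\<^sub>R y) > 0" using e by simp
  qed
  then show False using hyp indep ne unfolding hyperbolic_def by blast
qed

lemma neg_perp:
  assumes pol: "polarized G h" and yh: "bilR G y (ivec h) = 0" and y0: "y \<noteq> 0"
  shows "bilR G y y < 0"
proof (rule ccontr)
  assume "\<not> bilR G y y < 0"
  then have yy: "bilR G y y \<ge> 0" by simp
  let ?H = "ivec h"
  have ev: "even_lattice G" and hh0: "bil G h h > 0"
    using pol unfolding polarized_def hyperbolic_def by auto
  have hh: "bilR G ?H ?H > 0" using hh0 by (simp add: bilR_ivec)
  show False
  proof (cases "bilR G y y > 0")
    case True then show False using no_pos_perp[OF pol yh] by simp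
  next
    case False
    then have yy0: "bilR G y y = 0" using yy by simp
    obtain z where z: "bilR G y z \<noteq> 0" using nondeg[OF ev y0] by blast
    define z' where "z' = z - (bilR G z ?H / bilR G ?H ?H) *\<^sub>R ?H"
    have z'h: "bilR G z' ?H = 0" unfolding z'_def using hh by (simp add: bilR_simps)
    have yz': "bilR G y z' = bilR G y z" unfolding z'_def using yh by (simp add: bilR_simps)
    define t where "t = (1 - bilR G z' z') / (2 * bilR G y z')"
    define w where "w = z' + t *\<^sub>R y"
    have sy: "bilR G z' y = bilR G y z'" using bilR_sym[OF ev] by metis
    have "bilR G w w = bilR G z' z' + t * (2 * bilR G y z') + t*t* bilR G y y"
      unfolding w_def by (simp add: bilR_simps sy algebra_simps)
    also have "\<dots> = 1" using z yz' yy0 unfolding t_def by simp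
    finally have ww: "bilR G w w > 0" by simp
    have wh: "bilR G w ?H = 0" unfolding w_def using z'h yh by (simp add: bilR_simps)
    show False using no_pos_perp[OF pol wh ww] .
  qed
qed

lemmas bil_simps = bil_add1 bil_add2 bil_diff1 bil_diff2 bil_smult1 bil_smult2

lemma ivec_zero_iff: "ivec x = 0 \<longleftrightarrow> x = 0"
  unfolding ivec_def by (simp add: vec_eq_iff)

lemma neg_perp_int:
  assumes pol: "polarized G h" and yh: "bil G y h = 0" and y0: "y \<noteq> 0"
  shows "bil G y y < 0"
proof -
  have "bilR G (ivec y) (ivec h) = 0" using yh by (simp add: bilR_ivec)
  moreover have "ivec y \<noteq> 0" using y0 by (simp add: ivec_zero_iff)
  ultimately have "bilR G (ivec y) (ivec y) < 0" using neg_perp[OF pol] by blast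
  then show ?thesis by (simp add: bilR_ivec)
qed

lemma hodge:
  assumes pol: "polarized G h"
  shows "bil G h h * bil G x x \<le> (bil G x h)^2
     \<and> (bil G h h * bil G x x = (bil G x h)^2 \<longrightarrow> bil G h h *s x = bil G x h *s h)"
proof -
  have ev: "even_lattice G" and hh: "bil G h h > 0"
    using pol unfolding polarized_def hyperbolic_def by auto
  define u where "u = bil G h h *s x - bil G x h *s h"
  have sy: "bil G h x = bil G x h" using bil_sym[OF ev] by metis
  have uh: "bil G u h = 0" unfolding u_def by (simp add: bil_simps algebra_simps)
  have uu: "bil G u u = bil G h h * (bil G h h * bil G x x - (bil G x h)^2)"
    unfolding u_def by (simp add: bil_simps sy algebra_simps power2_eq_square)
  show ?thesis
  proof (cases "u = 0")
    case True
    then have "bil G u u = 0" unfolding bil_def by simp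
    then have "bil G h h * bil G x x - (bil G x h)^2 = 0" using uu hh by simp
    then show ?thesis using True unfolding u_def by simp
  next
    case False
    then have "bil G u u < 0" using neg_perp_int[OF pol uh] by simp
    then have "bil G h h * bil G x x - (bil G x h)^2 < 0" using uu hh
      by (simp add: mult_less_0_iff)
    then show ?thesis by simp
  qed
qed

definition Qf :: "int^'n^'n \<Rightarrow> int^'n \<Rightarrow> real^'n \<Rightarrow> real" where
  "Qf G h x = 2 * (bilR G x (ivec h))^2 - bilR G (ivec h) (ivec h) * bilR G x x"

lemma Qf_pos:
  assumes pol: "polarized G h" and x0: "x \<noteq> 0"
  shows "Qf G h x > 0"
proof -
  let ?H = "ivec h"
  have ev: "even_lattice G" and hh0: "bil G h h > 0"
    using pol unfolding polarized_def hyperbolic_def by auto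
  have hh: "bilR G ?H ?H > 0" using hh0 by (simp add: bilR_ivec)
  define u where "u = bilR G ?H ?H *\<^sub>R x - bilR G x ?H *\<^sub>R ?H"
  have sy: "bilR G ?H x = bilR G x ?H" using bilR_sym[OF ev] by metis
  have uh: "bilR G u ?H = 0" unfolding u_def by (simp add: bilR_simps algebra_simps)
  have uu: "bilR G u u = bilR G ?H ?H * (bilR G ?H ?H * bilR G x x - (bilR G x ?H)^2)"
    unfolding u_def by (simp add: bilR_simps sy algebra_simps power2_eq_square)
  show ?thesis
  proof (cases "u = 0")
    case True
    then have "bilR G ?H ?H * bilR G x x - (bilR G x ?H)^2 = 0" using uu hh by simp
    moreover have "bilR G x ?H \<noteq> 0"
    proof
      assume "bilR G x ?H = 0"
      then have "bilR G ?H ?H *\<^sub>R x = 0" using True unfolding u_def by simp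
      then show False using hh x0 by simp
    qed
    moreover have "0 < bilR G x ?H * bilR G x ?H" using \<open>bilR G x ?H \<noteq> 0\<close> not_real_square_gt_zero by blast
    ultimately show ?thesis unfolding Qf_def by (simp add: power2_eq_square)
  next
    case False
    then have "bilR G u u < 0" using neg_perp[OF pol uh] by simp
    then have "bilR G ?H ?H * bilR G x x - (bilR G x ?H)^2 < 0" using uu hh
      by (simp add: mult_less_0_iff)
    moreover have "(bilR G x ?H)^2 \<ge> 0" by simp
    ultimately show ?thesis unfolding Qf_def by linarith
  qed
qed

lemma Qf_scale: "Qf G h (a *\<^sub>R x) = a^2 * Qf G h x"
  unfolding Qf_def by (simp add: bilR_smult1 bilR_smult2 power2_eq_square algebra_simps)

lemma Qf_cont: "continuous_on UNIV (Qf G h)"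
  unfolding Qf_def bilR_def by (intro continuous_intros)


lemma Qf_lower:
  fixes G :: "int^'n^'n"
  assumes pol: "polarized G h"
  shows "\<exists>lam>0. \<forall>x. lam * (norm x)^2 \<le> Qf G h x"
proof -
  have C1: "compact (sphere (0::real^'n) 1)" by (rule compact_sphere)
  have C2: "sphere (0::real^'n) 1 \<noteq> {}"
  proof -
    have "axis (undefined::'n) (1::real) \<in> sphere (0::real^'n) 1" by (simp add: norm_axis_1)
    then show ?thesis by blast
  qed
  have C3: "continuous_on (sphere 0 1) (Qf G h)"
    using Qf_cont continuous_on_subset by blast
  obtain x0 where x0: "x0 \<in> sphere 0 1" "\<forall>y\<in>sphere 0 1. Qf G h x0 \<le> Qf G h y"
    using continuous_attains_inf[OF C1 C2 C3] by blast
  have x00: "x0 \<noteq> 0" using x0(1) by auto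
  have lam: "Qf G h x0 > 0" using Qf_pos[OF pol x00] .
  have "Qf G h x0 * (norm x)^2 \<le> Qf G h x" for x
  proof (cases "x = 0")
    case True then show ?thesis unfolding Qf_def by simp
  next
    case False
    let ?n = "norm x"
    have n0: "?n \<noteq> 0" using False by simp
    have "norm ((inverse ?n) *\<^sub>R x) = 1" using n0 by simp
    then have "(inverse ?n) *\<^sub>R x \<in> sphere 0 1" by simp
    then have "Qf G h x0 \<le> Qf G h ((inverse ?n) *\<^sub>R x)" using x0 by blast
    also have "\<dots> = (inverse ?n)^2 * Qf G h x" by (rule Qf_scale)
    finally have A: "Qf G h x0 \<le> (inverse ?n)^2 * Qf G h x" .
    have B: "Qf G h x0 * ?n^2 \<le> (inverse ?n)^2 * Qf G h x * ?n^2"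
      using mult_right_mono[OF A zero_le_power2] .
    have "(inverse ?n)^2 * ?n^2 = 1" using n0 by (simp add: power_mult_distrib[symmetric])
    then have "(inverse ?n)^2 * Qf G h x * ?n^2 = Qf G h x" by (metis mult.commute mult.left_commute mult_1_right)
    then show ?thesis using B by linarith
  qed
  then show ?thesis using lam by blast
qed
lemma finite_box: "finite {x::int^'n. \<forall>i. \<bar>x$i\<bar> \<le> B}"
proof -
  have "{x::int^'n. \<forall>i. \<bar>x$i\<bar> \<le> B} \<subseteq> vec_lambda ` (PiE UNIV (\<lambda>_. {-B..B}))"
  proof
    fix x :: "int^'n" assume "x \<in> {x. \<forall>i. \<bar>x$i\<bar> \<le> B}"
    then have xb: "\<bar>x$i\<bar> \<le> B" for i by simp
    have "x$i \<in> {-B..B}" for i using xb[of i] by (auto simp: abs_le_iff)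
    then have "(\<lambda>i. x$i) \<in> PiE UNIV (\<lambda>_. {-B..B})" by (auto simp: PiE_iff)
    moreover have "x = vec_lambda (\<lambda>i. x$i)" by simp
    ultimately show "x \<in> vec_lambda ` (PiE UNIV (\<lambda>_. {-B..B}))" by blast
  qed
  moreover have "finite (PiE (UNIV::'n set) (\<lambda>_. {-B..B}))" by (intro finite_PiE) auto
  ultimately show ?thesis using finite_subset by blast
qed

lemma finite_root0:
  fixes G :: "int^'n^'n"
  assumes pol: "polarized G h"
  shows "finite (root G h 0)"
proof -
  obtain lam where lam: "lam > 0" "\<forall>x. lam * (norm x)^2 \<le> Qf G h x" using Qf_lower[OF pol] by blast
  define C where "C = 2 * real_of_int (bil G h h) / lam"
  define B where "B = ceiling (sqrt C)"
  have "root G h 0 \<subseteq> {x::int^'n. \<forall>i. \<bar>x$i\<bar> \<le> B}"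
  proof
    fix r assume r: "r \<in> root G h 0"
    then have "bil G r r = -2" "bil G r h = 0" unfolding root_def by auto
    then have "Qf G h (ivec r) = 2 * real_of_int (bil G h h)" unfolding Qf_def by (simp add: bilR_ivec)
    then have "lam * (norm (ivec r))^2 \<le> 2 * real_of_int (bil G h h)" using lam(2) by metis
    then have n2: "(norm (ivec r))^2 \<le> C" unfolding C_def using lam(1) by (simp add: field_simps)
    have "norm (ivec r) \<le> sqrt C" using n2 real_le_rsqrt by simp
    have "\<forall>i. \<bar>r$i\<bar> \<le> B"
    proof
      fix i
      have "\<bar>(ivec r)$i\<bar> \<le> norm (ivec r)" by (rule component_le_norm_cart)
      then have "real_of_int \<bar>r$i\<bar> \<le> sqrt C" using \<open>norm (ivec r) \<le> sqrt C\<close> unfolding ivec_def by simp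
      then show "\<bar>r$i\<bar> \<le> B" unfolding B_def by linarith
    qed
    then show "r \<in> {x::int^'n. \<forall>i. \<bar>x$i\<bar> \<le> B}" by simp
  qed
  then show ?thesis using finite_box finite_subset by blast
qed


lemma ivec_add: "ivec (x + y) = ivec x + ivec y"
  unfolding ivec_def by (simp add: vec_eq_iff)

lemma fn_pos_root:
  fixes G :: "int^'n^'n"
  assumes pol: "polarized G h" and l: "l \<in> Fn G h c" and e: "e \<in> pos_roots G h c"
  shows "bil G l e \<ge> 0"
proof (rule ccontr)
  assume ne: "\<not> bil G l e \<ge> 0"
  define X where "X = {e \<in> pos_roots G h c. bil G l e < 0}"
  define cv where "cv = (\<lambda>e. bilR G c (ivec e))"
  have "X \<subseteq> root G h 0" unfolding X_def pos_roots_def by blast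
  then have fX: "finite X" using finite_root0[OF pol] by (rule finite_subset)
  have "e \<in> X" using e ne unfolding X_def by auto
  then have Xne: "cv ` X \<noteq> {}" by blast
  let ?m = "Min (cv ` X)"
  have fcX: "finite (cv ` X)" using fX by (rule finite_imageI)
  have "?m \<in> cv ` X" by (rule Min_in[OF fcX Xne])
  then obtain e0 where e0': "?m = cv e0" "e0 \<in> X" by (rule imageE)
  then have e0: "e0 \<in> X" "cv e0 = ?m" by simp_all
  have mn: "\<forall>e'\<in>X. cv e0 \<le> cv e'"
  proof
    fix e' assume "e' \<in> X"
    then have "cv e' \<in> cv ` X" by (rule imageI)
    then show "cv e0 \<le> cv e'" unfolding e0(2) by (rule Min_le[OF fcX])
  qed
  have "e0 \<notin> simple_roots G h c" using l e0(1) unfolding Fn_def X_def by force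
  then obtain a b where ab: "a \<in> pos_roots G h c" "b \<in> pos_roots G h c" "e0 = a + b"
    using e0(1) unfolding simple_roots_def X_def by blast
  have "bil G l a + bil G l b < 0" using e0(1) ab(3) unfolding X_def by (simp add: bil_add2)
  then have "a \<in> X \<or> b \<in> X" using ab unfolding X_def by force
  moreover have "cv e0 = cv a + cv b" unfolding cv_def ab(3) by (simp add: ivec_add bilR_add2)
  moreover have "cv a > 0" "cv b > 0" using ab unfolding pos_roots_def cv_def by auto
  ultimately show False using mn by force
qed

lemma fn_nonneg:
  fixes G :: "int^'n^'n"
  assumes pol: "polarized G h" and wg: "weyl_generic G h c"
    and l1: "l1 \<in> Fn G h c" and l2: "l2 \<in> Fn G h c" and ne: "l1 \<noteq> l2"
  shows "bil G l1 l2 \<ge> 0"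
proof (rule ccontr)
  assume "\<not> bil G l1 l2 \<ge> 0"
  then have b: "bil G l1 l2 < 0" by simp
  have ev: "even_lattice G" using pol unfolding polarized_def hyperbolic_def by auto
  have r1: "bil G l1 l1 = -2" "bil G l1 h = 1" using l1 unfolding Fn_def root_def by auto
  have r2: "bil G l2 l2 = -2" "bil G l2 h = 1" using l2 unfolding Fn_def root_def by auto
  have sy: "bil G l2 l1 = bil G l1 l2" using bil_sym[OF ev] by metis
  define d where "d = l1 - l2"
  have dh: "bil G d h = 0" unfolding d_def using r1 r2 by (simp add: bil_simps)
  have d0: "d \<noteq> 0" using ne unfolding d_def by simp
  have dd: "bil G d d = -4 - 2 * bil G l1 l2" unfolding d_def using r1 r2 sy by (simp add: bil_simps)
  have "bil G d d < 0" using neg_perp_int[OF pol dh d0] .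
  then have bm: "bil G l1 l2 = -1" using b dd by simp
  then have droot: "d \<in> root G h 0" using dh dd unfolding root_def by simp
  then have cd: "bilR G c (ivec d) \<noteq> 0" using wg unfolding weyl_generic_def by blast
  show False
  proof (cases "bilR G c (ivec d) > 0")
    case True
    then have "d \<in> pos_roots G h c" using droot unfolding pos_roots_def by simp
    then have "bil G l1 d \<ge> 0" using fn_pos_root[OF pol l1] by blast
    then show False unfolding d_def using r1 bm by (simp add: bil_simps)
  next
    case False
    define d' where "d' = l2 - l1"
    have "bilR G c (ivec d') = - bilR G c (ivec d)" unfolding d'_def d_def by (simp add: ivec_diff bilR_simps)
    then have "bilR G c (ivec d') > 0" using False cd by simp
    moreover have "d' \<in> root G h 0" using dh dd bm sy r1 r2 unfolding root_def d'_def by (simp add: bil_simps)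
    ultimately have "d' \<in> pos_roots G h c" unfolding pos_roots_def by simp
    then have "bil G l2 d' \<ge> 0" using fn_pos_root[OF pol l2] by blast
    then show False unfolding d'_def using r2 bm sy by (simp add: bil_simps)
  qed
qed


lemma no4_finite:
  assumes H: "\<And>a b c d. a \<in> S \<Longrightarrow> b \<in> S \<Longrightarrow> c \<in> S \<Longrightarrow> d \<in> S \<Longrightarrow>
     a \<noteq> b \<Longrightarrow> a \<noteq> c \<Longrightarrow> a \<noteq> d \<Longrightarrow> b \<noteq> c \<Longrightarrow> b \<noteq> d \<Longrightarrow> c \<noteq> d \<Longrightarrow> False"
  shows "finite S \<and> card S \<le> 3"
proof -
  have no: False if T: "T \<subseteq> S" "card T = Suc 3" for T
  proof -
    obtain x T' where xT: "T = insert x T'" "x \<notin> T'" "card T' = 3" using card_eq_SucD[OF T(2)] by blast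
    obtain p q r where pqr: "T' = {p,q,r}" "p \<noteq> q" "q \<noteq> r" "p \<noteq> r"
      using card_3_iff[THEN iffD1, OF xT(3)] by (elim exE conjE)
    have d: "x \<noteq> p" "x \<noteq> q" "x \<noteq> r" using xT(2) pqr(1) by blast+
    have m: "x \<in> S" "p \<in> S" "q \<in> S" "r \<in> S" using T(1) xT(1) pqr(1) by blast+
    show False by (rule H[OF m d pqr(2) pqr(4) pqr(3)])
  qed
  have fS: "finite S"
  proof (rule ccontr)
    assume "infinite S"
    from infinite_arbitrarily_large[OF this, of "Suc 3"] obtain T where
      "finite T" "card T = Suc 3" "T \<subseteq> S" by blast
    then show False using no by blast
  qed
  have "card S \<le> 3"
  proof (rule ccontr)
    assume "\<not> card S \<le> 3"
    then have "Suc 3 \<le> card S" by simp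
    then obtain T where "T \<subseteq> S" "card T = Suc 3" by (rule obtain_subset_with_card_n)
    then show False using no by blast
  qed
  then show ?thesis using fS by simp
qed

lemma no3_card:
  assumes "finite S" "\<And>a b c. a \<in> S \<Longrightarrow> b \<in> S \<Longrightarrow> c \<in> S \<Longrightarrow>
     a \<noteq> b \<Longrightarrow> a \<noteq> c \<Longrightarrow> b \<noteq> c \<Longrightarrow> False"
  shows "card S < 3"
proof (rule ccontr)
  assume "\<not> card S < 3"
  then have "3 \<le> card S" by simp
  then obtain T where T: "T \<subseteq> S" "card T = 3" by (rule obtain_subset_with_card_n)
  obtain p q r where pqr: "T = {p,q,r}" "p \<noteq> q" "q \<noteq> r" "p \<noteq> r"
    using card_3_iff[THEN iffD1, OF T(2)] by (elim exE conjE)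
  have m: "p \<in> S" "q \<in> S" "r \<in> S" using T(1) pqr(1) by blast+
  show False by (rule assms(2)[OF m pqr(2) pqr(4) pqr(3)])
qed

theorem lemma5p2:
  fixes G :: "int^'n^'n" and h :: "int^'n" and c :: "real^'n" and v1 v2 :: "int^'n"
  assumes "polarized G h" and "bil G h h = 8" and "admissible2 G h"
    and "weyl_generic G h c"
    and "v1 \<in> Fn G h c" and "v2 \<in> Fn G h c" and "v1 \<noteq> v2"
  shows "(\<forall>l1\<in>Star G h c v1 \<inter> Star G h c v2. \<forall>l2\<in>Star G h c v1 \<inter> Star G h c v2.
            l1 \<noteq> l2 \<longrightarrow> bil G l1 l2 = 0)
    \<and> finite (Star G h c v1 \<inter> Star G h c v2)
    \<and> (bil G v1 v2 = 1 \<longrightarrow> card (Star G h c v1 \<inter> Star G h c v2) \<le> 1)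
    \<and> (bil G v1 v2 = 0 \<longrightarrow> card (Star G h c v1 \<inter> Star G h c v2) \<le> 3)
    \<and> (admissible3 G h \<longrightarrow>
         (bil G v1 v2 = 1 \<longrightarrow> card (Star G h c v1 \<inter> Star G h c v2) < 1)
       \<and> (bil G v1 v2 = 0 \<longrightarrow> card (Star G h c v1 \<inter> Star G h c v2) < 3))"
proof -
  note pol = assms(1) and hh = assms(2) and adm2 = assms(3) and wg = assms(4)
    and v1F = assms(5) and v2F = assms(6) and ne = assms(7)
  let ?S = "Star G h c v1 \<inter> Star G h c v2"
  have ev: "even_lattice G" using pol unfolding polarized_def hyperbolic_def by simp
  have sy: "bil G x y = bil G y x" for x y by (rule bil_sym[OF ev])
  have v1: "bil G v1 v1 = -2" "bil G v1 h = 1" using v1F unfolding Fn_def root_def by simp_all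
  have v2: "bil G v2 v2 = -2" "bil G v2 h = 1" using v2F unfolding Fn_def root_def by simp_all
  have hv: "bil G h v1 = 1" "bil G h v2 = 1" using v1(2) v2(2) sy[of h v1] sy[of h v2] by simp_all
  have a21: "bil G v2 v1 = bil G v1 v2" by (rule sy)
  have a0: "bil G v1 v2 \<ge> 0" by (rule fn_nonneg[OF pol wg v1F v2F ne])
  have HD: "8 * bil G x x \<le> (bil G x h)^2 \<and> (8 * bil G x x = (bil G x h)^2 \<longrightarrow> 8 *s x = bil G x h *s h)" for x
    using hodge[OF pol, of x] unfolding hh .
  note F0 = v1 v2 hv a21 hh
  have "bil G (v1+v2) (v1+v2) = 2 * bil G v1 v2 - 4" "bil G (v1+v2) h = 2"
    by (simp_all add: bil_simps F0)
  then have a2: "8 * (2 * bil G v1 v2 - 4) \<le> 4" "8 * (2 * bil G v1 v2 - 4) = 0 \<Longrightarrow> isotropic G h 2 (v1+v2)"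
    using HD[of "v1+v2"] unfolding isotropic_def by simp_all
  have a1: "bil G v1 v2 \<le> 1"
  proof (rule ccontr)
    assume "\<not> bil G v1 v2 \<le> 1"
    then have "bil G v1 v2 = 2" using a2(1) by simp
    then have "isotropic G h 2 (v1+v2)" using a2(2) by simp
    then show False using adm2 unfolding admissible2_def by blast
  qed
  have st: "bil G l l = -2 \<and> bil G l h = 1 \<and> bil G h l = 1 \<and> bil G l v1 = 1 \<and> bil G v1 l = 1
     \<and> bil G l v2 = 1 \<and> bil G v2 l = 1 \<and> l \<in> Fn G h c" if "l \<in> ?S" for l
  proof -
    have "l \<in> Fn G h c" "bil G l v1 = 1" "bil G l v2 = 1" using that unfolding Star_def by simp_all
    moreover then have "bil G l l = -2" "bil G l h = 1" unfolding Fn_def root_def by simp_all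
    ultimately show ?thesis using sy[of h l] sy[of v1 l] sy[of v2 l] by simp
  qed
  have P1: "bil G l1 l2 = 0" if L: "l1 \<in> ?S" "l2 \<in> ?S" "l1 \<noteq> l2" for l1 l2
  proof -
    note s1 = st[OF L(1)] and s2 = st[OF L(2)]
    have b0: "bil G l1 l2 \<ge> 0" using fn_nonneg[OF pol wg _ _ L(3)] s1 s2 by simp
    have b21: "bil G l2 l1 = bil G l1 l2" by (rule sy)
    have "bil G (l1+l2+v1) (l1+l2+v1) = 2 * bil G l1 l2 - 2" "bil G (l1+l2+v1) h = 3"
      using s1 s2 by (simp_all add: bil_simps F0 b21)
    then have "8 * (2 * bil G l1 l2 - 2) \<le> 9" using HD[of "l1+l2+v1"] by simp
    then have b1: "bil G l1 l2 \<le> 1" by simp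
    show ?thesis
    proof (rule ccontr)
      assume "bil G l1 l2 \<noteq> 0"
      then have b: "bil G l1 l2 = 1" using b0 b1 by simp
      define x where "x = l1+l2+v1+v2"
      have xx: "bil G x x = 2 * bil G v1 v2 + 2" "bil G x h = 4" "bil G x l1 = 1"
        using s1 s2 b unfolding x_def by (simp_all add: bil_simps F0 b21)
      then have "8 * (2 * bil G v1 v2 + 2) \<le> 16" using HD[of x] by simp
      then have "bil G v1 v2 = 0" using a0 by simp
      then have "8 *s x = 4 *s h" using HD[of x] xx by simp
      then have "bil G (8 *s x) l1 = bil G (4 *s h) l1" by simp
      then show False using xx s1 by (simp add: bil_simps)
    qed
  qed
  have P2: "l1 = l2" if A: "bil G v1 v2 = 1" and L: "l1 \<in> ?S" "l2 \<in> ?S" for l1 l2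
  proof (rule ccontr)
    assume n: "l1 \<noteq> l2"
    note s1 = st[OF L(1)] and s2 = st[OF L(2)]
    have b: "bil G l1 l2 = 0" "bil G l2 l1 = 0" using P1[OF L n] sy[of l2 l1] by simp_all
    define x where "x = l1+l2+v1+v2"
    have xx: "bil G x x = 2" "bil G x h = 4" "bil G x l1 = 0"
      using s1 s2 b A unfolding x_def by (simp_all add: bil_simps F0)
    then have "8 *s x = 4 *s h" using HD[of x] by simp
    then have "bil G (8 *s x) l1 = bil G (4 *s h) l1" by simp
    then show False using xx s1 by (simp add: bil_simps)
  qed
  have P3: False if A: "bil G v1 v2 = 0" and L: "l1 \<in> ?S" "l2 \<in> ?S" "l3 \<in> ?S" "l4 \<in> ?S"
    and D: "l1 \<noteq> l2" "l1 \<noteq> l3" "l1 \<noteq> l4" "l2 \<noteq> l3" "l2 \<noteq> l4" "l3 \<noteq> l4" for l1 l2 l3 l4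
  proof -
    note s1 = st[OF L(1)] and s2 = st[OF L(2)] and s3 = st[OF L(3)] and s4 = st[OF L(4)]
    have b: "bil G l1 l2 = 0" "bil G l1 l3 = 0" "bil G l1 l4 = 0" "bil G l2 l3 = 0" "bil G l2 l4 = 0"
      "bil G l3 l4 = 0"
      "bil G l2 l1 = 0" "bil G l3 l1 = 0" "bil G l4 l1 = 0" "bil G l3 l2 = 0" "bil G l4 l2 = 0"
      "bil G l4 l3 = 0"
      using P1 L D by (metis sy)+
    define x where "x = 2 *s (v1+v2)+l1+l2+l3+l4"
    have xx: "bil G x x = 8" "bil G x h = 8" "bil G x l1 = 2"
      using s1 s2 s3 s4 b A unfolding x_def by (simp_all add: bil_simps F0)
    then have "8 *s x = 8 *s h" using HD[of x] by simp
    then have "bil G (8 *s x) l1 = bil G (8 *s h) l1" by simp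
    then show False using xx s1 by (simp add: bil_simps)
  qed
  have P4: False if A: "bil G v1 v2 = 1" and ad3: "admissible3 G h" and L: "l \<in> ?S" for l
  proof -
    note s1 = st[OF L]
    have "bil G (v1+v2+l) (v1+v2+l) = 0" "bil G (v1+v2+l) h = 3"
      using s1 A by (simp_all add: bil_simps F0)
    then have "isotropic G h 3 (v1+v2+l)" unfolding isotropic_def by simp
    then show False using ad3 unfolding admissible3_def by blast
  qed
  have P5: False if A: "bil G v1 v2 = 0" and ad3: "admissible3 G h"
    and L: "l1 \<in> ?S" "l2 \<in> ?S" "l3 \<in> ?S"
    and D: "l1 \<noteq> l2" "l1 \<noteq> l3" "l2 \<noteq> l3" for l1 l2 l3
  proof -
    note s1 = st[OF L(1)] and s2 = st[OF L(2)] and s3 = st[OF L(3)]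
    have b: "bil G l1 l2 = 0" "bil G l1 l3 = 0" "bil G l2 l3 = 0"
      "bil G l2 l1 = 0" "bil G l3 l1 = 0" "bil G l3 l2 = 0"
      using P1 L D by (metis sy)+
    define y where "y = h - (v1+v2+l1+l2+l3)"
    have "bil G y y = 0" "bil G y h = 3"
      using s1 s2 s3 b A unfolding y_def by (simp_all add: bil_simps F0)
    then have "isotropic G h 3 y" unfolding isotropic_def by simp
    then show False using ad3 unfolding admissible3_def by blast
  qed
  have acase: "bil G v1 v2 = 0 \<or> bil G v1 v2 = 1" using a0 a1 by linarith
  have fin: "finite ?S \<and> card ?S \<le> 3"
  proof (rule no4_finite)
    fix p q r s assume m: "p \<in> ?S" "q \<in> ?S" "r \<in> ?S" "s \<in> ?S"
      and d: "p \<noteq> q" "p \<noteq> r" "p \<noteq> s" "q \<noteq> r" "q \<noteq> s" "r \<noteq> s"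
    show False
    proof (cases "bil G v1 v2 = 0")
      case True show False by (rule P3[OF True m d])
    next
      case False then have "bil G v1 v2 = 1" using acase by simp
      then show False using P2[OF _ m(1) m(2)] d(1) by blast
    qed
  qed
  have c1: "card ?S \<le> 1" if A: "bil G v1 v2 = 1"
    using P2[OF A] fin card_le_Suc0_iff_eq[of ?S] by simp
  have c1s: "card ?S < 1" if A: "bil G v1 v2 = 1" and ad3: "admissible3 G h"
  proof -
    have "?S = {}" using P4[OF A ad3] by blast
    then show ?thesis by simp
  qed
  have c3s: "card ?S < 3" if A: "bil G v1 v2 = 0" and ad3: "admissible3 G h"
  proof (rule no3_card)
    show "finite ?S" using fin by simp
    fix p q r assume "p \<in> ?S" "q \<in> ?S" "r \<in> ?S" "p \<noteq> q" "p \<noteq> r" "q \<noteq> r"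
    then show False using P5[OF A ad3] by blast
  qed
  show ?thesis using P1 fin c1 c1s c3s by blast
qed

end
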